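(* Let $S_1,S_2$ be numerical semigroups and $a_1,a_2$ coprime positive integers with $a_2\in S_1$ and $a_1\in S_2$, and let $S=a_1S_1+a_2S_2$. Then $S_1\le_P S$ and $S_2\le_P S$, in each case with a relating polynomial having nonnegative integer coefficients; i.e. for $i=1,2$ there exist an integer $w_i\ge1$ and $f_i\in\mathbb N[x]$ with $\mathrm H_{S_i}(x^{w_i})f_i(x)=\mathrm H_S(x)$.
   Context: A numerical semigroup is a submonoid of $(\mathbb N,+)$ with finite complement in $\mathbb N$; $aA=\{ax:x\in A\}$, $A+B=\{x+y:x\in A,y\in B\}$. $\mathrm H_S(x)=\sum_{s\in S}x^s$. Numerical semigroups $S,T$ are polynomially related, $S\le_P T$, if there exist $f\in\mathbb Z[x]$ and an integer $w\ge1$ with $\mathrm H_S(x^w)f(x)=\mathrm H_T(x)$. $\mathbb N[x]$ denotes polynomials with nonnegative integer coefficients. (In the paper, $S$ is called the gluing $a_1S_1+_{a_1a_2}a_2S_2$.) *)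

theory Defs
  imports "HOL-Computational_Algebra.Polynomial_FPS"
begin

definition numerical_semigroup :: "nat set \<Rightarrow> bool" where
  "numerical_semigroup S \<longleftrightarrow> 0 \<in> S \<and> (\<forall>x\<in>S. \<forall>y\<in>S. x + y \<in> S) \<and> finite (UNIV - S)"

definition hilbert_series :: "nat set \<Rightarrow> int fps" where
  "hilbert_series S = Abs_fps (\<lambda>n. if n \<in> S then 1 else 0)"

definition lin_comb_set :: "nat \<Rightarrow> nat set \<Rightarrow> nat \<Rightarrow> nat set \<Rightarrow> nat set" where
  "lin_comb_set a A b B = {a * x + b * y | x y. x \<in> A \<and> y \<in> B}"

definition poly_related :: "nat set \<Rightarrow> nat set \<Rightarrow> bool" where
  "poly_related S T \<longleftrightarrow> (\<exists>(f::int poly) (w::nat). w \<ge> 1 \<and>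
     (hilbert_series S oo fps_X ^ w) * fps_of_poly f = hilbert_series T)"

end

theory Submission
  imports Defs
begin

lemma compose_nth:
  assumes "w \<ge> 1"
  shows "fps_nth (hilbert_series S oo fps_X ^ w) n = (if w dvd n \<and> n div w \<in> S then 1 else 0)"
proof -
  have "fps_nth (hilbert_series S oo fps_X ^ w) n =
        (\<Sum>i\<in>{0..n}. (if i \<in> S then 1 else 0) * (if n = w * i then 1 else 0))"
    by (simp add: fps_compose_nth hilbert_series_def power_mult[symmetric])
  also have "\<dots> = (\<Sum>i\<in>{0..n}. if i = n div w \<and> w dvd n \<and> n div w \<in> S then 1 else 0)"
  proof (rule sum.cong[OF refl])
    fix i assume "i \<in> {0..n}"
    show "(if i \<in> S then 1 else 0) * (if n = w * i then 1 else 0) =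
          (if i = n div w \<and> w dvd n \<and> n div w \<in> S then 1 else (0::int))"
      using assms by auto
  qed
  also have "\<dots> = (if w dvd n \<and> n div w \<in> S then 1 else 0)"
  proof (cases "w dvd n \<and> n div w \<in> S")
    case True
    then have "(\<Sum>i\<in>{0..n}. if i = n div w \<and> w dvd n \<and> n div w \<in> S then 1 else (0::int)) = (\<Sum>i\<in>{0..n}. if i = n div w then 1 else 0)"
      by (intro sum.cong) auto
    also have "\<dots> = 1" using sum.delta[of "{0..n}" "n div w" "\<lambda>_. 1::int"] by simp
    finally show ?thesis using True by simp
  next
    case False
    have "(\<Sum>i\<in>{0..n}. if i = n div w \<and> w dvd n \<and> n div w \<in> S then 1 else (0::int)) = 0"
      by (rule sum.neutral) (use False in auto)
    moreover have "(if w dvd n \<and> n div w \<in> S then 1 else 0) = (0::int)" using False by simp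
    ultimately show ?thesis by (simp only:)
  qed
  finally show ?thesis .
qed

lemma mult_in:
  assumes "numerical_semigroup S" "a \<in> S" shows "a * k \<in> S"
  using assms by (induction k) (auto simp: numerical_semigroup_def)

lemma core:
  assumes ns1: "numerical_semigroup S1" and ns2: "numerical_semigroup S2"
    and "a1 > 0" and "a2 > 0" and cop: "coprime a1 a2"
    and a2in: "a2 \<in> S1" and a1in: "a1 \<in> S2"
  shows "\<exists>(f::int poly) (w::nat). w \<ge> 1 \<and> (\<forall>i. coeff f i \<ge> 0) \<and>
       (hilbert_series S1 oo fps_X ^ w) * fps_of_poly f = hilbert_series (lin_comb_set a1 S1 a2 S2)"
proof -
  define Ap where "Ap = {y \<in> S2. \<not> (a1 \<le> y \<and> y - a1 \<in> S2)}"
  have "finite (UNIV - S2)" using ns2 by (simp add: numerical_semigroup_def)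
  then obtain B where B: "\<And>z. z \<in> UNIV - S2 \<Longrightarrow> z < B"
    using finite_nat_bounded by blast
  have "Ap \<subseteq> {..<B + a1}"
  proof
    fix y assume y: "y \<in> Ap"
    show "y \<in> {..<B + a1}"
    proof (rule ccontr)
      assume "y \<notin> {..<B + a1}"
      then have "a1 \<le> y" "y - a1 \<ge> B" by auto
      then have "y - a1 \<in> S2" using B[of "y - a1"] by auto
      with y \<open>a1 \<le> y\<close> show False by (auto simp: Ap_def)
    qed
  qed
  then have finAp: "finite Ap" by (rule finite_subset) simp
  have ex: "\<forall>u. u \<in> S1 \<longrightarrow> y \<in> S2 \<longrightarrow> (\<exists>u' y'. u' \<in> S1 \<and> y' \<in> Ap \<and> a1*u+a2*y = a1*u'+a2*y')" for y
  proof (induction y rule: less_induct)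
    case (less y)
    show ?case
    proof (intro allI impI)
      fix u assume u: "u \<in> S1" and y: "y \<in> S2"
      show "\<exists>u' y'. u' \<in> S1 \<and> y' \<in> Ap \<and> a1*u+a2*y = a1*u'+a2*y'"
      proof (cases "y \<in> Ap")
        case True then show ?thesis using u by blast
      next
        case False
        then have h: "a1 \<le> y" "y - a1 \<in> S2" using y by (auto simp: Ap_def)
        have "u + a2 \<in> S1" using u a2in ns1 by (simp add: numerical_semigroup_def)
        moreover have "y - a1 < y" using h \<open>a1 > 0\<close> by simp
        ultimately obtain u' y' where "u' \<in> S1" "y' \<in> Ap" "a1*(u+a2)+a2*(y-a1) = a1*u'+a2*y'"
          using less.IH[rule_format, of "y - a1" "u + a2"] h(2) by blast
        moreover have "a1*(u+a2)+a2*(y-a1) = a1*u+a2*y"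
        proof -
          obtain d where "y = a1 + d" using h(1) le_Suc_ex by blast
          then show ?thesis by (simp add: algebra_simps)
        qed
        ultimately show ?thesis by auto
      qed
    qed
  qed
  have uniq: "y = y'" if "y \<in> Ap" "y' \<in> Ap" "a1*u+a2*y = a1*u'+a2*y'" for u u' y y'
  proof -
    have gen: "y = y'" if "y \<in> Ap" "y' \<in> Ap" "a1*u+a2*y = a1*u'+a2*y'" "y \<le> y'" for u u' y y'
    proof -
      have "a1 * u = a1 * u' + a2 * (y' - y)" using that
        by (simp add: diff_mult_distrib2)
      then have "a1 dvd a1 * u' + a2 * (y' - y)" by (metis dvd_triv_left)
      then have "a1 dvd a2 * (y' - y)" by (simp add: dvd_add_right_iff)
      then have "a1 dvd (y' - y)" using cop coprime_dvd_mult_right_iff by blast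
      then obtain k where k: "y' - y = a1 * k" by blast
      show ?thesis
      proof (cases k)
        case 0 then show ?thesis using k \<open>y \<le> y'\<close> by simp
      next
        case (Suc m)
        have "y' - a1 = y + a1 * m" using k Suc \<open>y \<le> y'\<close> by simp
        moreover have "a1 * m \<in> S2" by (rule mult_in[OF ns2 a1in])
        moreover have "y \<in> S2" using that by (simp add: Ap_def)
        ultimately have "y' - a1 \<in> S2" using ns2 by (simp add: numerical_semigroup_def)
        moreover have "a1 \<le> y'" using k Suc \<open>y \<le> y'\<close> by (simp add: le_diff_conv2)
        ultimately show ?thesis using that(2) by (simp add: Ap_def)
      qed
    qed
    show ?thesis
    proof (cases "y \<le> y'")
      case True then show ?thesis using gen that by blast
    next
      case False then show ?thesis using gen[of y' y u' u] that by simp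
    qed
  qed
  define f :: "int poly" where "f = (\<Sum>y\<in>Ap. monom 1 (a2*y))"
  have fcoef: "\<forall>i. coeff f i \<ge> 0"
    by (simp add: f_def coeff_sum sum_nonneg)
  have "(hilbert_series S1 oo fps_X ^ a1) * fps_of_poly f = hilbert_series (lin_comb_set a1 S1 a2 S2)"
  proof (rule fps_ext)
    fix n
    have "fps_nth ((hilbert_series S1 oo fps_X ^ a1) * fps_of_poly f) n =
       (\<Sum>y\<in>Ap. fps_nth (fps_X ^ (a2*y) * (hilbert_series S1 oo fps_X ^ a1)) n)"
      by (simp add: f_def fps_of_poly_sum fps_of_poly_monom' sum_distrib_left fps_sum_nth mult.commute)
    also have "\<dots> = (\<Sum>y\<in>Ap. if (\<exists>u\<in>S1. n = a1*u + a2*y) then 1 else 0)"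
    proof (rule sum.cong[OF refl])
      fix y assume "y \<in> Ap"
      have "fps_nth (fps_X ^ (a2*y) * (hilbert_series S1 oo fps_X ^ a1)) n =
            (if n < a2*y then 0 else (if a1 dvd (n - a2*y) \<and> (n - a2*y) div a1 \<in> S1 then 1 else 0))"
        using \<open>a1 > 0\<close> by (simp add: fps_X_power_mult_nth compose_nth)
      also have "\<dots> = (if (\<exists>u\<in>S1. n = a1*u + a2*y) then 1 else 0)"
      proof -
        have "(\<not> n < a2*y \<and> a1 dvd (n - a2*y) \<and> (n - a2*y) div a1 \<in> S1) \<longleftrightarrow> (\<exists>u\<in>S1. n = a1*u + a2*y)"
        proof
          assume h: "\<not> n < a2*y \<and> a1 dvd (n - a2*y) \<and> (n - a2*y) div a1 \<in> S1"
          then have "n = a1 * ((n - a2*y) div a1) + a2*y" by simp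
          with h show "\<exists>u\<in>S1. n = a1*u + a2*y" by blast
        next
          assume "\<exists>u\<in>S1. n = a1*u + a2*y"
          then obtain u where "u \<in> S1" "n = a1*u + a2*y" by blast
          then show "\<not> n < a2*y \<and> a1 dvd (n - a2*y) \<and> (n - a2*y) div a1 \<in> S1"
            using \<open>a1 > 0\<close> by simp
        qed
        then show ?thesis by (auto split: if_splits)
      qed
      finally show "fps_nth (fps_X ^ (a2*y) * (hilbert_series S1 oo fps_X ^ a1)) n =
          (if (\<exists>u\<in>S1. n = a1*u + a2*y) then 1 else 0)" .
    qed
    also have "\<dots> = fps_nth (hilbert_series (lin_comb_set a1 S1 a2 S2)) n"
    proof (cases "n \<in> lin_comb_set a1 S1 a2 S2")
      case True
      then obtain u y where "u \<in> S1" "y \<in> S2" "n = a1*u + a2*y" by (auto simp: lin_comb_set_def)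
      then obtain u0 y0 where u0: "u0 \<in> S1" "y0 \<in> Ap" "n = a1*u0+a2*y0" using ex by metis
      have "(\<Sum>y\<in>Ap. if (\<exists>u\<in>S1. n = a1*u + a2*y) then 1 else (0::int)) =
            (\<Sum>y\<in>Ap. if y = y0 then 1 else 0)"
      proof (rule sum.cong[OF refl])
        fix y assume "y \<in> Ap"
        show "(if (\<exists>u\<in>S1. n = a1*u + a2*y) then 1 else (0::int)) = (if y = y0 then 1 else 0)"
        proof (cases "\<exists>u\<in>S1. n = a1*u + a2*y")
          case True
          then obtain u where "u \<in> S1" "n = a1*u + a2*y" by blast
          then have "y = y0" using uniq[of y y0 u u0] \<open>y \<in> Ap\<close> u0 by simp
          then show ?thesis using True by simp
        next
          case False
          then have "y \<noteq> y0" using u0 by blast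
          then show ?thesis using False by simp
        qed
      qed
      also have "\<dots> = 1" using finAp u0(2) by simp
      finally show ?thesis using True by (simp add: hilbert_series_def)
    next
      case False
      have "\<not> (\<exists>u\<in>S1. n = a1*u + a2*y)" if "y \<in> Ap" for y
        using False that by (auto simp: lin_comb_set_def Ap_def)
      then show ?thesis using False by (simp add: hilbert_series_def)
    qed
    finally show "fps_nth ((hilbert_series S1 oo fps_X ^ a1) * fps_of_poly f) n =
        fps_nth (hilbert_series (lin_comb_set a1 S1 a2 S2)) n" .
  qed
  then show ?thesis using fcoef \<open>a1 > 0\<close> by (intro exI[of _ f] exI[of _ a1]) simp
qed

theorem theorem6:
  fixes S1 S2 :: "nat set" and a1 a2 :: nat
  assumes "numerical_semigroup S1" and "numerical_semigroup S2"
    and "a1 > 0" and "a2 > 0" and "coprime a1 a2"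
    and "a2 \<in> S1" and "a1 \<in> S2"
  defines "S \<equiv> lin_comb_set a1 S1 a2 S2"
  shows "poly_related S1 S \<and> poly_related S2 S \<and>
    (\<exists>(f::int poly) (w::nat). w \<ge> 1 \<and> (\<forall>i. coeff f i \<ge> 0) \<and>
       (hilbert_series S1 oo fps_X ^ w) * fps_of_poly f = hilbert_series S) \<and>
    (\<exists>(f::int poly) (w::nat). w \<ge> 1 \<and> (\<forall>i. coeff f i \<ge> 0) \<and>
       (hilbert_series S2 oo fps_X ^ w) * fps_of_poly f = hilbert_series S)"
proof -
  have sw: "lin_comb_set a1 S1 a2 S2 = lin_comb_set a2 S2 a1 S1"
    by (auto simp: lin_comb_set_def add.commute)
  have c1: "\<exists>(f::int poly) (w::nat). w \<ge> 1 \<and> (\<forall>i. coeff f i \<ge> 0) \<and>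
       (hilbert_series S1 oo fps_X ^ w) * fps_of_poly f = hilbert_series S"
    unfolding S_def by (rule core) (use assms in auto)
  have c2: "\<exists>(f::int poly) (w::nat). w \<ge> 1 \<and> (\<forall>i. coeff f i \<ge> 0) \<and>
       (hilbert_series S2 oo fps_X ^ w) * fps_of_poly f = hilbert_series S"
    unfolding S_def sw by (rule core) (use assms in \<open>auto simp: coprime_commute\<close>)
  show ?thesis using c1 c2 unfolding poly_related_def by blast
qed

end
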